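(* Let $X$ be a set and let $A$ and $B$ be Banach algebras of complex-valued functions on $X$ (with pointwise operations), each containing the constant functions on $X$. Let $\psi:A\to B$ be a continuous algebra homomorphism and $\varphi\in\Delta(B)$. If $f\in A$ satisfies $P(f)=0$ for some nonzero polynomial $P$ in one complex variable, then $D(f)=0$ for every $(\varphi,\psi)$-point derivation $D$ on $A$.
   Context: $\Delta(B)$ denotes the set of all nonzero multiplicative linear functionals on $B$. A bounded linear functional $D$ on $A$ is a $(\varphi,\psi)$-point derivation if $D(ab)=\varphi(\psi(a))\,D(b)+\varphi(\psi(b))\,D(a)$ for all $a,b\in A$. For $P(z)=\sum_{k=0}^{n}c_kz^k$, $P(f)=\sum_{k=0}^n c_k f^k$ with $f^0$ the constant function $1$. *)

theory Defs
  imports "HOL-Analysis.Analysis" "HOL-Computational_Algebra.Polynomial"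
begin

text \<open>Complex-valued functions on a set X, modelled as the type 'x; operations are pointwise.\<close>

definition banach_function_algebra ::
  "('x \<Rightarrow> complex) set \<Rightarrow> (('x \<Rightarrow> complex) \<Rightarrow> real) \<Rightarrow> bool" where
  "banach_function_algebra A nA \<longleftrightarrow>
     (\<forall>c::complex. (\<lambda>x. c) \<in> A) \<and>
     (\<forall>f\<in>A. \<forall>g\<in>A. (\<lambda>x. f x + g x) \<in> A) \<and>
     (\<forall>c::complex. \<forall>f\<in>A. (\<lambda>x. c * f x) \<in> A) \<and>
     (\<forall>f\<in>A. \<forall>g\<in>A. (\<lambda>x. f x * g x) \<in> A) \<and>
     (\<forall>f\<in>A. 0 \<le> nA f) \<and>
     (\<forall>f\<in>A. nA f = 0 \<longleftrightarrow> f = (\<lambda>x. 0)) \<and>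
     (\<forall>f\<in>A. \<forall>g\<in>A. nA (\<lambda>x. f x + g x) \<le> nA f + nA g) \<and>
     (\<forall>c::complex. \<forall>f\<in>A. nA (\<lambda>x. c * f x) = cmod c * nA f) \<and>
     (\<forall>f\<in>A. \<forall>g\<in>A. nA (\<lambda>x. f x * g x) \<le> nA f * nA g) \<and>
     (\<forall>u::nat \<Rightarrow> ('x \<Rightarrow> complex). (\<forall>n. u n \<in> A) \<longrightarrow>
        (\<forall>e>0. \<exists>N. \<forall>m\<ge>N. \<forall>n\<ge>N. nA (\<lambda>x. u m x - u n x) < e) \<longrightarrow>
        (\<exists>g\<in>A. \<forall>e>0. \<exists>N. \<forall>n\<ge>N. nA (\<lambda>x. u n x - g x) < e))"

definition alg_hom ::
  "('x \<Rightarrow> complex) set \<Rightarrow> (('x \<Rightarrow> complex) \<Rightarrow> ('y \<Rightarrow> complex)) \<Rightarrow> bool" where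
  "alg_hom A \<psi> \<longleftrightarrow>
     (\<forall>f\<in>A. \<forall>g\<in>A. \<psi> (\<lambda>x. f x + g x) = (\<lambda>y. \<psi> f y + \<psi> g y)) \<and>
     (\<forall>c. \<forall>f\<in>A. \<psi> (\<lambda>x. c * f x) = (\<lambda>y. c * \<psi> f y)) \<and>
     (\<forall>f\<in>A. \<forall>g\<in>A. \<psi> (\<lambda>x. f x * g x) = (\<lambda>y. \<psi> f y * \<psi> g y))"

definition continuous_map_norms ::
  "('x \<Rightarrow> complex) set \<Rightarrow> (('x \<Rightarrow> complex) \<Rightarrow> real) \<Rightarrow> (('y \<Rightarrow> complex) \<Rightarrow> real)
    \<Rightarrow> (('x \<Rightarrow> complex) \<Rightarrow> ('y \<Rightarrow> complex)) \<Rightarrow> bool" where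
  "continuous_map_norms A nA nB \<psi> \<longleftrightarrow>
     (\<forall>f\<in>A. \<forall>e>0. \<exists>d>0. \<forall>g\<in>A. nA (\<lambda>x. g x - f x) < d \<longrightarrow>
        nB (\<lambda>y. \<psi> g y - \<psi> f y) < e)"

definition linear_functional :: "('x \<Rightarrow> complex) set \<Rightarrow> (('x \<Rightarrow> complex) \<Rightarrow> complex) \<Rightarrow> bool" where
  "linear_functional A L \<longleftrightarrow>
     (\<forall>f\<in>A. \<forall>g\<in>A. L (\<lambda>x. f x + g x) = L f + L g) \<and>
     (\<forall>c. \<forall>f\<in>A. L (\<lambda>x. c * f x) = c * L f)"

definition character_space :: "('x \<Rightarrow> complex) set \<Rightarrow> (('x \<Rightarrow> complex) \<Rightarrow> complex) set" where
  "character_space B = {\<phi>. linear_functional B \<phi> \<and>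
     (\<forall>f\<in>B. \<forall>g\<in>B. \<phi> (\<lambda>x. f x * g x) = \<phi> f * \<phi> g) \<and> (\<exists>f\<in>B. \<phi> f \<noteq> 0)}"

definition point_derivation ::
  "('x \<Rightarrow> complex) set \<Rightarrow> (('x \<Rightarrow> complex) \<Rightarrow> real) \<Rightarrow> (('y \<Rightarrow> complex) \<Rightarrow> complex)
    \<Rightarrow> (('x \<Rightarrow> complex) \<Rightarrow> ('y \<Rightarrow> complex)) \<Rightarrow> (('x \<Rightarrow> complex) \<Rightarrow> complex) \<Rightarrow> bool" where
  "point_derivation A nA \<phi> \<psi> D \<longleftrightarrow>
     linear_functional A D \<and> (\<exists>C. \<forall>f\<in>A. cmod (D f) \<le> C * nA f) \<and>
     (\<forall>a\<in>A. \<forall>b\<in>A. D (\<lambda>x. a x * b x) = \<phi> (\<psi> a) * D b + \<phi> (\<psi> b) * D a)"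

end

theory Submission
  imports Defs
begin

theorem proposition2p5:
  fixes A :: "('x \<Rightarrow> complex) set" and nA :: "('x \<Rightarrow> complex) \<Rightarrow> real"
    and B :: "('x \<Rightarrow> complex) set" and nB :: "('x \<Rightarrow> complex) \<Rightarrow> real"
    and \<psi> :: "('x \<Rightarrow> complex) \<Rightarrow> ('x \<Rightarrow> complex)"
    and \<phi> :: "('x \<Rightarrow> complex) \<Rightarrow> complex"
    and D :: "('x \<Rightarrow> complex) \<Rightarrow> complex"
    and f :: "'x \<Rightarrow> complex" and P :: "complex poly"
  assumes "banach_function_algebra A nA"
    and "banach_function_algebra B nB"
    and "\<forall>a\<in>A. \<psi> a \<in> B"
    and "alg_hom A \<psi>"
    and "continuous_map_norms A nA nB \<psi>"
    and "\<phi> \<in> character_space B"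
    and "f \<in> A"
    and "P \<noteq> 0"
    and "(\<lambda>x. poly P (f x)) = (\<lambda>x. 0)"
    and "point_derivation A nA \<phi> \<psi> D"
  shows "D f = 0"
proof -
  have cA: "\<And>c. (\<lambda>x. c) \<in> A"
    and addA: "\<And>g h. g \<in> A \<Longrightarrow> h \<in> A \<Longrightarrow> (\<lambda>x. g x + h x) \<in> A"
    and smA: "\<And>c g. g \<in> A \<Longrightarrow> (\<lambda>x. c * g x) \<in> A"
    and mulA: "\<And>g h. g \<in> A \<Longrightarrow> h \<in> A \<Longrightarrow> (\<lambda>x. g x * h x) \<in> A"
    using assms(1) unfolding banach_function_algebra_def by blast+
  have psiB: "\<And>a. a \<in> A \<Longrightarrow> \<psi> a \<in> B" using assms(3) by blast
  have psiadd: "\<And>g h. g \<in> A \<Longrightarrow> h \<in> A \<Longrightarrow> \<psi> (\<lambda>x. g x + h x) = (\<lambda>y. \<psi> g y + \<psi> h y)"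
    and psism: "\<And>c g. g \<in> A \<Longrightarrow> \<psi> (\<lambda>x. c * g x) = (\<lambda>y. c * \<psi> g y)"
    and psimul: "\<And>g h. g \<in> A \<Longrightarrow> h \<in> A \<Longrightarrow> \<psi> (\<lambda>x. g x * h x) = (\<lambda>y. \<psi> g y * \<psi> h y)"
    using assms(4) unfolding alg_hom_def by blast+
  have phiadd: "\<And>g h. g \<in> B \<Longrightarrow> h \<in> B \<Longrightarrow> \<phi> (\<lambda>x. g x + h x) = \<phi> g + \<phi> h"
    and phism: "\<And>c g. g \<in> B \<Longrightarrow> \<phi> (\<lambda>x. c * g x) = c * \<phi> g"
    and phimul: "\<And>g h. g \<in> B \<Longrightarrow> h \<in> B \<Longrightarrow> \<phi> (\<lambda>x. g x * h x) = \<phi> g * \<phi> h"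
    using assms(6) unfolding character_space_def linear_functional_def by blast+
  have Dadd: "\<And>g h. g \<in> A \<Longrightarrow> h \<in> A \<Longrightarrow> D (\<lambda>x. g x + h x) = D g + D h"
    and Dsm: "\<And>c g. g \<in> A \<Longrightarrow> D (\<lambda>x. c * g x) = c * D g"
    and Dmul: "\<And>a b. a \<in> A \<Longrightarrow> b \<in> A \<Longrightarrow> D (\<lambda>x. a x * b x) = \<phi> (\<psi> a) * D b + \<phi> (\<psi> b) * D a"
    using assms(10) unfolding point_derivation_def linear_functional_def by blast+
  define chi where "chi a = \<phi> (\<psi> a)" for a
  have chiadd: "\<And>g h. g \<in> A \<Longrightarrow> h \<in> A \<Longrightarrow> chi (\<lambda>x. g x + h x) = chi g + chi h"
    unfolding chi_def by (simp add: psiadd phiadd psiB)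
  have chism: "\<And>c g. g \<in> A \<Longrightarrow> chi (\<lambda>x. c * g x) = c * chi g"
    unfolding chi_def by (simp add: psism phism psiB)
  have chimul: "\<And>g h. g \<in> A \<Longrightarrow> h \<in> A \<Longrightarrow> chi (\<lambda>x. g x * h x) = chi g * chi h"
    unfolding chi_def by (simp add: psimul phimul psiB)
  define e :: "'x \<Rightarrow> complex" where "e = (\<lambda>x. 1)"
  have eA: "e \<in> A" unfolding e_def by (rule cA)
  have ee: "(\<lambda>x. e x * e x) = e" unfolding e_def by simp
  have "chi e = chi e * chi e" using chimul[OF eA eA] ee by simp
  then have chie: "chi e = 0 \<or> chi e = 1"
    by (metis mult_cancel_left1)
  have fe: "(\<lambda>x. f x * e x) = f" unfolding e_def by simp
  show ?thesis
  proof (cases "chi e = 0")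
    case True
    have "D f = chi f * D e + chi e * D f" using Dmul[OF assms(7) eA] fe
      unfolding chi_def by simp
    moreover have "chi f = 0" using chimul[OF assms(7) eA] fe True by simp
    ultimately show ?thesis using True by simp
  next
    case False
    then have chie1: "chi e = 1" using chie by simp
    have "D e = chi e * D e + chi e * D e" using Dmul[OF eA eA] ee unfolding chi_def by simp
    then have De: "D e = 0" using chie1 by simp
    have cfe: "\<And>c. (\<lambda>x::'x. c) = (\<lambda>x. c * e x)" unfolding e_def by simp
    have Dc: "\<And>c. D (\<lambda>x. c) = 0" using Dsm[OF eA] De cfe by simp
    have chic: "\<And>c. chi (\<lambda>x. c) = c" using chism[OF eA] chie1 cfe by simp
    define l where "l = chi f"
    have polyA: "(\<lambda>x. poly p (f x)) \<in> A \<and> chi (\<lambda>x. poly p (f x)) = poly p l" for p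
    proof (induction p)
      case 0
      then show ?case using cA[of 0] chic[of 0] by simp
    next
      case (pCons a p)
      have m: "(\<lambda>x. f x * poly p (f x)) \<in> A" using mulA[OF assms(7)] pCons.IH by blast
      have eq: "(\<lambda>x. poly (pCons a p) (f x)) = (\<lambda>x. (\<lambda>x. a) x + (\<lambda>x. f x * poly p (f x)) x)"
        by simp
      show ?case unfolding eq using addA[OF cA m] chiadd[OF cA m] chimul[OF assms(7)] pCons.IH
        chic l_def by simp
    qed
    have Sfin: "finite {r. poly P r = 0}" using poly_roots_finite[OF assms(8)] .
    define Q where "Q = (\<Prod>r\<in>{r. poly P r = 0} - {l}. [:-r, 1:])"
    have polyQ: "poly Q z = (\<Prod>r\<in>{r. poly P r = 0} - {l}. z - r)" for z
      unfolding Q_def by (simp add: poly_prod)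
    have Ql: "poly Q l \<noteq> 0" unfolding polyQ using Sfin by simp
    have zero: "(\<lambda>x. (f x - l) * poly Q (f x)) = (\<lambda>x. 0)"
    proof
      fix x
      show "(f x - l) * poly Q (f x) = 0"
      proof (cases "f x = l")
        case False
        have "poly P (f x) = 0" using assms(9) by meson
        then have "f x \<in> {r. poly P r = 0} - {l}" using False by simp
        then have "poly Q (f x) = 0" unfolding polyQ using Sfin
          by (simp add: prod_zero_iff)
        then show ?thesis by simp
      qed simp
    qed
    define g where "g = (\<lambda>x. f x + (- l))"
    have gA: "g \<in> A" unfolding g_def using addA[OF assms(7) cA] .
    have Dg: "D g = D f" unfolding g_def using Dadd[OF assms(7) cA, of "- l"] Dc[of "- l"] by simp
    have chig: "chi g = 0" unfolding g_def using chiadd[OF assms(7) cA, of "- l"] chic[of "- l"] l_def by simp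
    have qA: "(\<lambda>x. poly Q (f x)) \<in> A" using polyA by blast
    have "D (\<lambda>x. g x * poly Q (f x)) = chi g * D (\<lambda>x. poly Q (f x)) + chi (\<lambda>x. poly Q (f x)) * D g"
      using Dmul[OF gA qA] unfolding chi_def by simp
    moreover have "(\<lambda>x. g x * poly Q (f x)) = (\<lambda>x. 0)" using zero unfolding g_def by simp
    ultimately have "0 = poly Q l * D f" using Dc chig Dg polyA by simp
    then show ?thesis using Ql by simp
  qed
qed

end
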